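(* Let $S_0,S_1,S_2$ be pair-partitions of $[2k]$. Then, as functions on Young diagrams, $N^{(2)}_{S_0,S_1,S_2}=2^{|\mathcal{L}(S_0,S_1)|}\,N^{(1)}_{S_0,S_1,S_2}$.
   Context: Pair-partitions of $[2k]$ are sets of disjoint two-element subsets with union $[2k]$, identified with fixed-point-free involutions. $\mathcal{L}(S_0,S_1)$ is the bipartite graph with a black vertex per pair of $S_0$, a white vertex per pair of $S_1$, and an edge for each $i\in[2k]$ joining the pairs containing $i$; it is a union of loops and $|\mathcal{L}(S_0,S_1)|$ is the number of loops. $N^{(1)}_{S_0,S_1,S_2}(\lambda)$ is the number of functions $f$ from $[2k]$ to the boxes of $\lambda$ such that for all $l$: $f(l)=f(S_0(l))$; $f(l)$ and $f(S_1(l))$ are in the same column; $f(l)$ and $f(S_2(l))$ are in the same row. $2\lambda=(2\lambda_1,2\lambda_2,\dots)$; two boxes of $2\lambda$ are neighbors if they are in the same row and in columns $2i+1$ and $2i+2$ for some $i\ge0$. $N^{(2)}_{S_0,S_1,S_2}(\lambda)$ is the number of functions $f$ from $[2k]$ to the boxes of $2\lambda$ such that for all $l$: $f(l)$ and $f(S_0(l))$ are neighbors; $f(l)$ and $f(S_0\circ S_1(l))$ are in the same column; $f(l)$ and $f(S_2(l))$ are in the same row. *)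

theory Defs
  imports Main "HOL-Library.FuncSet"
begin

text \<open>Ground set [2k] = {1..2k}. A pair-partition is identified with a
 fixed-point-free involution of [2k].\<close>

definition pair_partition :: "nat \<Rightarrow> (nat \<Rightarrow> nat) \<Rightarrow> bool" where
  "pair_partition k S \<longleftrightarrow>
     (\<forall>i\<in>{1..2*k}. S i \<in> {1..2*k} \<and> S (S i) = i \<and> S i \<noteq> i)"

definition pairs :: "nat \<Rightarrow> (nat \<Rightarrow> nat) \<Rightarrow> nat set set" where
  "pairs k S = {{i, S i} | i. i \<in> {1..2*k}}"

text \<open>The bipartite graph L(S0,S1): black vertices Inl p (p a pair of S0),
 white vertices Inr q (q a pair of S1); for each i an edge joining the pairs
 containing i, i.e. Inl p and Inr q are adjacent iff p and q share an element.\<close>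
definition loop_vertices :: "nat \<Rightarrow> (nat \<Rightarrow> nat) \<Rightarrow> (nat \<Rightarrow> nat) \<Rightarrow> (nat set + nat set) set" where
  "loop_vertices k S0 S1 = Inl ` pairs k S0 \<union> Inr ` pairs k S1"

definition loop_adj :: "nat \<Rightarrow> (nat \<Rightarrow> nat) \<Rightarrow> (nat \<Rightarrow> nat) \<Rightarrow> ((nat set + nat set) \<times> (nat set + nat set)) set" where
  "loop_adj k S0 S1 =
     {(Inl p, Inr q) | p q. p \<in> pairs k S0 \<and> q \<in> pairs k S1 \<and>
        (\<exists>i\<in>{1..2*k}. i \<in> p \<and> i \<in> q)} \<union>
     {(Inr q, Inl p) | p q. p \<in> pairs k S0 \<and> q \<in> pairs k S1 \<and>
        (\<exists>i\<in>{1..2*k}. i \<in> p \<and> i \<in> q)}"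

definition num_loops :: "nat \<Rightarrow> (nat \<Rightarrow> nat) \<Rightarrow> (nat \<Rightarrow> nat) \<Rightarrow> nat" where
  "num_loops k S0 S1 =
     card (loop_vertices k S0 S1 // ((loop_adj k S0 S1)\<^sup>* \<inter>
            (loop_vertices k S0 S1 \<times> loop_vertices k S0 S1)))"

text \<open>Young diagrams: weakly decreasing lists of positive row lengths.
 Boxes are (row, column), 0-indexed.\<close>
definition young :: "nat list \<Rightarrow> bool" where
  "young lam \<longleftrightarrow> sorted_wrt (\<ge>) lam \<and> (\<forall>x\<in>set lam. 0 < x)"

definition boxes :: "nat list \<Rightarrow> (nat \<times> nat) set" where
  "boxes lam = {(r, c). r < length lam \<and> c < lam ! r}"

definition double_diagram :: "nat list \<Rightarrow> nat list" where
  "double_diagram lam = map (\<lambda>x. 2 * x) lam"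

text \<open>Neighbors: same row, columns 2i+1 and 2i+2 (1-indexed), i.e. 2i and 2i+1
 0-indexed.\<close>
definition neighbors :: "nat \<times> nat \<Rightarrow> nat \<times> nat \<Rightarrow> bool" where
  "neighbors a b \<longleftrightarrow> fst a = fst b \<and>
     (\<exists>i. (snd a = 2*i \<and> snd b = 2*i+1) \<or> (snd a = 2*i+1 \<and> snd b = 2*i))"

definition N1 :: "nat \<Rightarrow> (nat \<Rightarrow> nat) \<Rightarrow> (nat \<Rightarrow> nat) \<Rightarrow> (nat \<Rightarrow> nat) \<Rightarrow> nat list \<Rightarrow> nat" where
  "N1 k S0 S1 S2 lam = card {f \<in> {1..2*k} \<rightarrow>\<^sub>E boxes lam.
      \<forall>l\<in>{1..2*k}. f l = f (S0 l) \<and> snd (f l) = snd (f (S1 l))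
                    \<and> fst (f l) = fst (f (S2 l))}"

definition N2 :: "nat \<Rightarrow> (nat \<Rightarrow> nat) \<Rightarrow> (nat \<Rightarrow> nat) \<Rightarrow> (nat \<Rightarrow> nat) \<Rightarrow> nat list \<Rightarrow> nat" where
  "N2 k S0 S1 S2 lam = card {f \<in> {1..2*k} \<rightarrow>\<^sub>E boxes (double_diagram lam).
      \<forall>l\<in>{1..2*k}. neighbors (f l) (f (S0 l)) \<and> snd (f l) = snd (f (S0 (S1 l)))
                    \<and> fst (f l) = fst (f (S2 l))}"

end

theory Submission imports Defs begin

inductive reach :: "(nat\<Rightarrow>nat) \<Rightarrow> (nat\<Rightarrow>nat) \<Rightarrow> nat \<Rightarrow> nat \<Rightarrow> bool \<Rightarrow> bool"
  for S0 S1 x where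
  r0: "reach S0 S1 x x False"
| r1: "reach S0 S1 x y e \<Longrightarrow> reach S0 S1 x (S0 y) (\<not>e)"
| r2: "reach S0 S1 x y e \<Longrightarrow> reach S0 S1 x (S1 y) (\<not>e)"

locale pp =
  fixes k :: nat and S0 S1 :: "nat \<Rightarrow> nat"
  assumes p0: "pair_partition k S0" and p1: "pair_partition k S1"
begin

definition "X = {1..2*k}"
definition "T = S1 \<circ> S0"
definition "U = S0 \<circ> S1"

lemma S0X: "x \<in> X \<Longrightarrow> S0 x \<in> X" and S0S0: "x \<in> X \<Longrightarrow> S0 (S0 x) = x"
  and S0ne: "x \<in> X \<Longrightarrow> S0 x \<noteq> x"
  using p0 unfolding pair_partition_def X_def by blast+
lemma S1X: "x \<in> X \<Longrightarrow> S1 x \<in> X" and S1S1: "x \<in> X \<Longrightarrow> S1 (S1 x) = x"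
  and S1ne: "x \<in> X \<Longrightarrow> S1 x \<noteq> x"
  using p1 unfolding pair_partition_def X_def by blast+

lemma TX: "x \<in> X \<Longrightarrow> (T^^n) x \<in> X"
  by (induction n) (auto simp: T_def S0X S1X)
lemma UX: "x \<in> X \<Longrightarrow> (U^^n) x \<in> X"
  by (induction n) (auto simp: U_def S0X S1X)

lemma TU1: "x \<in> X \<Longrightarrow> T (U x) = x" by (simp add: T_def U_def S0X S1X S0S0 S1S1)
lemma UT1: "x \<in> X \<Longrightarrow> U (T x) = x" by (simp add: T_def U_def S0X S1X S0S0 S1S1)

lemma TU: "x \<in> X \<Longrightarrow> (T^^n) ((U^^n) x) = x"
proof (induction n)
  case (Suc n)
  have "(T^^Suc n) ((U^^Suc n) x) = (T^^n) (T (U ((U^^n) x)))"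
    by (simp add: funpow_swap1)
  also have "\<dots> = x" using Suc TU1 UX by simp
  finally show ?case .
qed simp

lemma UT: "x \<in> X \<Longrightarrow> (U^^n) ((T^^n) x) = x"
proof (induction n)
  case (Suc n)
  have "(U^^Suc n) ((T^^Suc n) x) = (U^^n) (U (T ((T^^n) x)))"
    by (simp add: funpow_swap1)
  also have "\<dots> = x" using Suc UT1 TX by simp
  finally show ?case .
qed simp

lemma Tinj: "x \<in> X \<Longrightarrow> y \<in> X \<Longrightarrow> (T^^n) x = (T^^n) y \<Longrightarrow> x = y"
  by (metis UT)
lemma Uinj: "x \<in> X \<Longrightarrow> y \<in> X \<Longrightarrow> (U^^n) x = (U^^n) y \<Longrightarrow> x = y"
  by (metis TU)

lemma S0T: "x \<in> X \<Longrightarrow> S0 ((T^^n) x) = (U^^n) (S0 x)"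
proof (induction n)
  case (Suc n)
  have "S0 ((T^^Suc n) x) = U (S0 ((T^^n) x))"
    using TX[OF Suc.prems, of n] by (simp add: T_def U_def S0X S0S0)
  then show ?case using Suc by simp
qed simp

lemma S1U: "x \<in> X \<Longrightarrow> S1 ((U^^n) x) = (T^^n) (S1 x)"
proof (induction n)
  case (Suc n)
  have "S1 ((U^^Suc n) x) = T (S1 ((U^^n) x))"
    using UX[OF Suc.prems, of n] by (simp add: T_def U_def S1X S1S1)
  then show ?case using Suc by simp
qed simp

lemma lemA: "x \<in> X \<Longrightarrow> (T^^j) x \<noteq> S0 x"
proof
  assume x: "x \<in> X" and h: "(T^^j) x = S0 x"
  obtain i where "j = 2*i \<or> j = 2*i+1" by (metis oddE evenE)
  then show False
  proof
    assume j: "j = 2*i"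
    have "S0 ((T^^i) x) = (U^^i) ((T^^j) x)" using S0T[OF x] h by simp
    also have "\<dots> = (U^^i) ((T^^i) ((T^^i) x))" by (simp add: j mult_2 funpow_add)
    also have "\<dots> = (T^^i) x" using UT TX x by simp
    finally show False using S0ne TX x by blast
  next
    assume j: "j = 2*i+1"
    have "S0 ((T^^i) x) = (U^^i) ((T^^j) x)" using S0T[OF x] h by simp
    also have "\<dots> = (U^^i) ((T^^i) ((T^^Suc i) x))"
    proof -
      have "j = i + Suc i" using j by simp
      then show ?thesis by (simp only: funpow_add comp_apply)
    qed
    also have "\<dots> = (T^^Suc i) x" using UT TX x by blast
    also have "\<dots> = S1 (S0 ((T^^i) x))" by (simp add: T_def)
    finally show False using S1ne S0X TX x by metis
  qed
qed

lemma lemB: "x \<in> X \<Longrightarrow> (T^^j) x \<noteq> S1 x"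
proof
  assume x: "x \<in> X" and h: "(T^^j) x = S1 x"
  show False
  proof (cases j)
    case 0 then show ?thesis using h S1ne x by force
  next
    case (Suc j')
    have "T ((T^^j') x) = T (S0 x)" using h Suc x by (simp add: T_def S0S0)
    then have "(T^^1) ((T^^j') x) = (T^^1) (S0 x)" by simp
    then have "(T^^j') x = S0 x" using Tinj TX S0X x by blast
    then show ?thesis using lemA x by blast
  qed
qed

lemma lemC: "x \<in> X \<Longrightarrow> (U^^j) x \<noteq> S0 x"
proof
  assume x: "x \<in> X" and h: "(U^^j) x = S0 x"
  have "(T^^j) (S0 x) = x" using h TU[OF x] by metis
  then show False using lemA[OF S0X[OF x], of j] S0S0 x by simp
qed

definition "evn x y \<longleftrightarrow> (\<exists>n. y = (T^^n) x) \<or> (\<exists>n. y = (U^^n) x)"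
definition "odf x y \<longleftrightarrow> (\<exists>n. y = S0 ((T^^n) x)) \<or> (\<exists>n. y = S1 ((U^^n) x))"

lemma TSuc: "(T^^Suc m) x = S1 (S0 ((T^^m) x))" by (simp add: T_def)
lemma USuc: "(U^^Suc m) x = S0 (S1 ((U^^m) x))" by (simp add: U_def)

lemma reach_X: "reach S0 S1 x y e \<Longrightarrow> x \<in> X \<Longrightarrow> y \<in> X"
  by (induction rule: reach.induct) (auto simp: S0X S1X)

lemma reach_form: "reach S0 S1 x y e \<Longrightarrow> x \<in> X \<Longrightarrow> (if e then odf x y else evn x y)"
proof (induction rule: reach.induct)
  case r0
  then show ?case unfolding evn_def by (metis funpow_0)
next
  case (r1 y e)
  have yX: "y \<in> X" using r1 reach_X by blast
  show ?case
  proof (cases e)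
    case True
    then have "odf x y" using r1 by simp
    then consider n where "y = S0 ((T^^n) x)" | n where "y = S1 ((U^^n) x)" unfolding odf_def by blast
    then have "evn x (S0 y)"
    proof cases
      case 1 then show ?thesis unfolding evn_def using S0S0[OF TX[OF r1.prems]] by auto
    next
      case 2 then have "S0 y = (U^^Suc n) x" using USuc by simp
      then show ?thesis unfolding evn_def by blast
    qed
    then show ?thesis using True by simp
  next
    case False
    then have "evn x y" using r1 by simp
    then consider n where "y = (T^^n) x" | n where "y = (U^^n) x" unfolding evn_def by blast
    then show ?thesis
    proof cases
      case 1 then show ?thesis using False unfolding odf_def by auto
    next
      case 2
      show ?thesis
      proof (cases n)
        case 0 then show ?thesis using 2 False unfolding odf_def by (metis funpow_0)
      next
        case (Suc m)
        have "S0 y = S1 ((U^^m) x)" using 2 Suc USuc S0S0[OF S1X[OF UX[OF r1.prems]]] by simp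
        then show ?thesis using False unfolding odf_def by auto
      qed
    qed
  qed
next
  case (r2 y e)
  have yX: "y \<in> X" using r2 reach_X by blast
  show ?case
  proof (cases e)
    case True
    then have "odf x y" using r2 by simp
    then consider n where "y = S0 ((T^^n) x)" | n where "y = S1 ((U^^n) x)" unfolding odf_def by blast
    then have "evn x (S1 y)"
    proof cases
      case 2 then show ?thesis unfolding evn_def using S1S1[OF UX[OF r2.prems]] by auto
    next
      case 1 then have "S1 y = (T^^Suc n) x" using TSuc by simp
      then show ?thesis unfolding evn_def by blast
    qed
    then show ?thesis using True by simp
  next
    case False
    then have "evn x y" using r2 by simp
    then consider n where "y = (T^^n) x" | n where "y = (U^^n) x" unfolding evn_def by blast
    then show ?thesis
    proof cases
      case 2 then show ?thesis using False unfolding odf_def by auto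
    next
      case 1
      show ?thesis
      proof (cases n)
        case 0 then show ?thesis using 1 False unfolding odf_def by (metis funpow_0)
      next
        case (Suc m)
        have "S1 y = S0 ((T^^m) x)" using 1 Suc TSuc S1S1[OF S0X[OF TX[OF r2.prems]]] by simp
        then show ?thesis using False unfolding odf_def by auto
      qed
    qed
  qed
qed

lemma evn_odf: "x \<in> X \<Longrightarrow> evn x y \<Longrightarrow> odf x y \<Longrightarrow> False"
proof -
  assume x: "x \<in> X" and e: "evn x y" and o: "odf x y"
  from e consider n where "y = (T^^n) x" | n where "y = (U^^n) x" unfolding evn_def by blast
  then show False
  proof cases
    case 1
    from o consider m where "y = S0 ((T^^m) x)" | m where "y = S1 ((U^^m) x)" unfolding odf_def by blast
    then show False
    proof cases
      case a: 1
      have "(T^^n) x = (U^^m) (S0 x)" using 1 a S0T x by simp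
      then have "(T^^m) ((T^^n) x) = S0 x" using TU S0X x by metis
      then have "(T^^(m+n)) x = S0 x" by (simp add: funpow_add)
      then show False using lemA x by blast
    next
      case b: 2
      have h: "(T^^n) x = (T^^m) (S1 x)" using 1 b S1U x by simp
      show False
      proof (cases "m \<le> n")
        case True
        then have "(T^^m) ((T^^(n-m)) x) = (T^^n) x"
          by (metis funpow_add comp_apply le_add_diff_inverse)
        then have "(T^^(n-m)) x = S1 x" using h Tinj TX S1X x by metis
        then show False using lemB x by blast
      next
        case False
        then have "(T^^n) ((T^^(m-n)) (S1 x)) = (T^^m) (S1 x)"
          by (metis funpow_add comp_apply le_add_diff_inverse nat_le_linear)
        then have "(T^^(m-n)) (S1 x) = x" using h Tinj TX S1X x by metis
        then show False using lemB[OF S1X[OF x], of "m-n"] S1S1 x by simp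
      qed
    qed
  next
    case 2
    from o consider m where "y = S0 ((T^^m) x)" | m where "y = S1 ((U^^m) x)" unfolding odf_def by blast
    then show False
    proof cases
      case c: 1
      have h: "(U^^n) x = (U^^m) (S0 x)" using 2 c S0T x by simp
      show False
      proof (cases "m \<le> n")
        case True
        then have "(U^^m) ((U^^(n-m)) x) = (U^^n) x"
          by (metis funpow_add comp_apply le_add_diff_inverse)
        then have "(U^^(n-m)) x = S0 x" using h Uinj UX S0X x by metis
        then show False using lemC x by blast
      next
        case False
        then have "(U^^n) ((U^^(m-n)) (S0 x)) = (U^^m) (S0 x)"
          by (metis funpow_add comp_apply le_add_diff_inverse nat_le_linear)
        then have "(U^^(m-n)) (S0 x) = x" using h Uinj UX S0X x by metis
        then show False using lemC[OF S0X[OF x], of "m-n"] S0S0 x by simp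
      qed
    next
      case d: 2
      have h: "(U^^n) x = (T^^m) (S1 x)" using 2 d S1U x by simp
      then have "x = (T^^n) ((T^^m) (S1 x))" using TU x by metis
      then have "(T^^(n+m)) (S1 x) = x" by (simp add: funpow_add)
      then show False using lemB[OF S1X[OF x], of "n+m"] S1S1 x by simp
    qed
  qed
qed

lemma reach_excl: "x \<in> X \<Longrightarrow> reach S0 S1 x y True \<Longrightarrow> reach S0 S1 x y False \<Longrightarrow> False"
  using reach_form evn_odf by fastforce

lemma reach_trans: "reach S0 S1 y z e' \<Longrightarrow> reach S0 S1 x y e \<Longrightarrow> reach S0 S1 x z (e \<noteq> e')"
proof (induction rule: reach.induct)
  case r0 then show ?case by simp
next
  case (r1 z e') then show ?case using reach.r1 by fastforce
next
  case (r2 z e') then show ?case using reach.r2 by fastforce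
qed

lemma reach_back0: "y \<in> X \<Longrightarrow> reach S0 S1 (S0 y) y True"
  using reach.r1[OF reach.r0[of S0 S1 "S0 y"]] S0S0 by simp
lemma reach_back1: "y \<in> X \<Longrightarrow> reach S0 S1 (S1 y) y True"
  using reach.r2[OF reach.r0[of S0 S1 "S1 y"]] S1S1 by simp

lemma reach_sym: "reach S0 S1 x y e \<Longrightarrow> x \<in> X \<Longrightarrow> reach S0 S1 y x e"
proof (induction rule: reach.induct)
  case r0 then show ?case by (simp add: reach.intros)
next
  case (r1 y e)
  have "y \<in> X" using r1 reach_X by blast
  then show ?case using reach_trans[OF r1.IH[OF r1.prems] reach_back0] by simp
next
  case (r2 y e)
  have "y \<in> X" using r2 reach_X by blast
  then show ?case using reach_trans[OF r2.IH[OF r2.prems] reach_back1] by simp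
qed

definition "E = {(x,y). x \<in> X \<and> y \<in> X \<and> (\<exists>e. reach S0 S1 x y e)}"

lemma equivE: "equiv X E"
  unfolding equiv_def refl_on_def sym_def trans_def E_def
  using reach.r0 reach_sym reach_trans by blast

definition "Bset = {b \<in> X \<rightarrow>\<^sub>E (UNIV::bool set). \<forall>l\<in>X. b (S0 l) = (\<not> b l) \<and> b (S1 l) = (\<not> b l)}"

lemma b_reach: "reach S0 S1 x y e \<Longrightarrow> x \<in> X \<Longrightarrow> b \<in> Bset \<Longrightarrow> b y = (b x \<noteq> e)"
proof (induction rule: reach.induct)
  case r0 then show ?case by simp
next
  case (r1 y e)
  have "y \<in> X" using r1 reach_X by blast
  then show ?case using r1 unfolding Bset_def by auto
next
  case (r2 y e)
  have "y \<in> X" using r2 reach_X by blast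
  then show ?case using r2 unfolding Bset_def by auto
qed

definition "rep C = (SOME x. x \<in> C)"

lemma rep_props: assumes "C \<in> X // E" shows "rep C \<in> X" "E `` {rep C} = C"
proof -
  obtain x where x: "x \<in> X" "C = E `` {x}" using assms unfolding quotient_def by blast
  have "x \<in> C" using x equiv_class_self[OF equivE x(1)] by simp
  then have r: "rep C \<in> C" unfolding rep_def by (metis someI)
  then show "rep C \<in> X" using x unfolding E_def by auto
  show "E `` {rep C} = C" using r x equivE by (metis equiv_class_eq Image_singleton_iff)
qed

lemma card_Bset: "card Bset = 2 ^ card (X // E)"
proof -
  define Phi :: "(nat \<Rightarrow> bool) \<Rightarrow> nat set \<Rightarrow> bool" where "Phi = (\<lambda>b. restrict (\<lambda>C. b (rep C)) (X // E))"
  have inj: "inj_on Phi Bset"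
  proof (rule inj_onI)
    fix b b' assume b: "b \<in> Bset" and b': "b' \<in> Bset" and eq: "Phi b = Phi b'"
    show "b = b'"
    proof
      fix y
      show "b y = b' y"
      proof (cases "y \<in> X")
        case False
        then show ?thesis using b b' unfolding Bset_def by (auto simp: PiE_def extensional_def)
      next
        case True
        define C where "C = E `` {y}"
        have C: "C \<in> X // E" using True unfolding C_def by (simp add: quotientI)
        have "rep C \<in> C" using rep_props[OF C] equivE by (metis equiv_class_self)
        then obtain e where "reach S0 S1 y (rep C) e" unfolding C_def E_def by auto
        then have re: "reach S0 S1 (rep C) y e" using reach_sym True by blast
        have "b (rep C) = b' (rep C)" using fun_cong[OF eq, of C] C unfolding Phi_def by simp
        then show ?thesis using b_reach[OF re rep_props(1)[OF C] b] b_reach[OF re rep_props(1)[OF C] b'] by simp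
      qed
    qed
  qed
  have img: "Phi ` Bset = (X // E) \<rightarrow>\<^sub>E (UNIV::bool set)"
  proof
    show "Phi ` Bset \<subseteq> (X // E) \<rightarrow>\<^sub>E (UNIV::bool set)" unfolding Phi_def by auto
  next
    show "(X // E) \<rightarrow>\<^sub>E (UNIV::bool set) \<subseteq> Phi ` Bset"
    proof
      fix d assume d: "d \<in> (X // E) \<rightarrow>\<^sub>E (UNIV::bool set)"
      define b where "b = restrict (\<lambda>y. d (E``{y}) \<noteq> reach S0 S1 (rep (E``{y})) y True) X"
      have par: "\<exists>e0. reach S0 S1 (rep (E``{l})) l e0 \<and> (reach S0 S1 (rep (E``{l})) l True = e0)"
        if l: "l \<in> X" for l
      proof -
        have C: "E``{l} \<in> X // E" using l by (simp add: quotientI)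
        have "rep (E``{l}) \<in> E``{l}" using rep_props[OF C] equivE by (metis equiv_class_self)
        then obtain e0 where "reach S0 S1 l (rep (E``{l})) e0" unfolding E_def by auto
        then have re: "reach S0 S1 (rep (E``{l})) l e0" using reach_sym l by blast
        have "reach S0 S1 (rep (E``{l})) l True = e0"
          using re reach_excl[OF rep_props(1)[OF C]] by (cases e0) auto
        then show ?thesis using re by blast
      qed
      have bB: "b \<in> Bset"
        unfolding Bset_def
      proof (intro CollectI conjI ballI)
        show "b \<in> X \<rightarrow>\<^sub>E UNIV" unfolding b_def by simp
      next
        fix l assume l: "l \<in> X"
        have E0: "E``{S0 l} = E``{l}"
          using l S0X equivE reach.r1[OF reach.r0[of S0 S1 l]]
          by (intro equiv_class_eq[OF equivE]) (auto simp: E_def intro!: reach_sym)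
        obtain e0 where re: "reach S0 S1 (rep (E``{l})) l e0" and t: "reach S0 S1 (rep (E``{l})) l True = e0"
          using par[OF l] by blast
        have CX: "rep (E``{l}) \<in> X" using rep_props(1) l by (simp add: quotientI)
        have "reach S0 S1 (rep (E``{l})) (S0 l) True = (\<not> e0)"
          using reach.r1[OF re] reach_excl[OF CX] by (cases e0) auto
        then show "b (S0 l) = (\<not> b l)" using E0 t l S0X unfolding b_def by auto
      next
        fix l assume l: "l \<in> X"
        have E0: "E``{S1 l} = E``{l}"
          using l S1X equivE reach.r2[OF reach.r0[of S0 S1 l]]
          by (intro equiv_class_eq[OF equivE]) (auto simp: E_def intro!: reach_sym)
        obtain e0 where re: "reach S0 S1 (rep (E``{l})) l e0" and t: "reach S0 S1 (rep (E``{l})) l True = e0"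
          using par[OF l] by blast
        have CX: "rep (E``{l}) \<in> X" using rep_props(1) l by (simp add: quotientI)
        have "reach S0 S1 (rep (E``{l})) (S1 l) True = (\<not> e0)"
          using reach.r2[OF re] reach_excl[OF CX] by (cases e0) auto
        then show "b (S1 l) = (\<not> b l)" using E0 t l S1X unfolding b_def by auto
      qed
      have "Phi b = d"
      proof
        fix C show "Phi b C = d C"
        proof (cases "C \<in> X // E")
          case False then show ?thesis using d unfolding Phi_def by (auto simp: PiE_def extensional_def)
        next
          case True
          have r: "rep C \<in> X" "E `` {rep C} = C" using rep_props[OF True] by auto
          have "\<not> reach S0 S1 (rep C) (rep C) True" using reach_excl[OF r(1)] reach.r0 by blast
          then show ?thesis using True r unfolding Phi_def b_def by simp
        qed
      qed
      then show "d \<in> Phi ` Bset" using bB by blast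
    qed
  qed
  have "card Bset = card ((X // E) \<rightarrow>\<^sub>E (UNIV::bool set))"
    using card_image[OF inj] img by simp
  also have "\<dots> = 2 ^ card (X // E)"
  proof -
    have "finite (X // E)" by (rule finite_quotient) (auto simp: X_def E_def)
    then show ?thesis by (simp add: card_PiE)
  qed
  finally show ?thesis .
qed

lemma card_eq_kernel:
  assumes "\<forall>x\<in>A. \<forall>y\<in>A. f x = f y \<longleftrightarrow> g x = g y"
  shows "card (f ` A) = card (g ` A)"
proof -
  define h where "h = (\<lambda>z. g (inv_into A f z))"
  have hf: "h (f x) = g x" if "x \<in> A" for x
  proof -
    have "inv_into A f (f x) \<in> A" "f (inv_into A f (f x)) = f x"
      using that by (auto intro: inv_into_into f_inv_into_f)
    then show ?thesis using assms that unfolding h_def by blast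
  qed
  have "inj_on h (f ` A)"
  proof (rule inj_onI)
    fix a b assume "a \<in> f ` A" "b \<in> f ` A" "h a = h b"
    then obtain x y where "x \<in> A" "y \<in> A" "a = f x" "b = f y" "g x = g y" using hf by auto
    then show "a = b" using assms by blast
  qed
  moreover have "h ` (f ` A) = g ` A" using hf by (auto simp: image_image)
  ultimately show ?thesis by (metis card_image)
qed

lemma pairs_elem: assumes "pair_partition k S" "p \<in> pairs k S" "i \<in> p"
  shows "p = {i, S i}" "i \<in> X"
proof -
  obtain j where j: "j \<in> X" "p = {j, S j}" using assms(2) unfolding pairs_def X_def by auto
  have "S j \<in> X" "S (S j) = j" using assms(1) j(1) unfolding pair_partition_def X_def by auto
  then show "p = {i, S i}" "i \<in> X" using j assms(3) by auto
qed

lemma pairs_mem: assumes "i \<in> X" shows "{i, S i} \<in> pairs k S"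
  using assms unfolding pairs_def X_def by blast

abbreviation "Adj \<equiv> loop_adj k S0 S1"
abbreviation "V \<equiv> loop_vertices k S0 S1"

lemma adjI: assumes "p \<in> pairs k S0" "q \<in> pairs k S1" "i \<in> X" "i \<in> p" "i \<in> q"
  shows "(Inl p, Inr q) \<in> Adj" "(Inr q, Inl p) \<in> Adj"
proof -
  have "\<exists>i\<in>{1..2*k}. i \<in> p \<and> i \<in> q" using assms unfolding X_def by blast
  then show "(Inl p, Inr q) \<in> Adj" "(Inr q, Inl p) \<in> Adj" using assms(1,2) unfolding loop_adj_def by blast+
qed

lemma graph_to_reach:
  assumes "(Inl {x, S0 x}, w) \<in> Adj\<^sup>*" "x \<in> X"
  shows "\<forall>i \<in> case_sum id id w. \<exists>e. reach S0 S1 x i e"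
  using assms(1)
proof (induction rule: rtrancl_induct)
  case base
  show ?case using reach.r0[of S0 S1 x] reach.r1[OF reach.r0[of S0 S1 x]] by auto
next
  case (step w w')
  have "(\<exists>p q i0. w = Inl p \<and> w' = Inr q \<and> p \<in> pairs k S0 \<and> q \<in> pairs k S1 \<and> i0 \<in> p \<and> i0 \<in> q)
     \<or> (\<exists>p q i0. w = Inr q \<and> w' = Inl p \<and> p \<in> pairs k S0 \<and> q \<in> pairs k S1 \<and> i0 \<in> p \<and> i0 \<in> q)"
    using step.hyps(2) unfolding loop_adj_def by blast
  then show ?case
  proof (elim disjE exE conjE)
    fix p q i0 assume e: "w = Inl p" "w' = Inr q" and p: "p \<in> pairs k S0" and q: "q \<in> pairs k S1"
      and i0: "i0 \<in> p" "i0 \<in> q"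
    obtain e0 where r: "reach S0 S1 x i0 e0" using step.IH e i0 by auto
    have "q = {i0, S1 i0}" using pairs_elem(1)[OF p1 q i0(2)] .
    then show ?thesis using e r reach.r2[OF r] by auto
  next
    fix p q i0 assume e: "w = Inr q" "w' = Inl p" and p: "p \<in> pairs k S0" and q: "q \<in> pairs k S1"
      and i0: "i0 \<in> p" "i0 \<in> q"
    obtain e0 where r: "reach S0 S1 x i0 e0" using step.IH e i0 by auto
    have "p = {i0, S0 i0}" using pairs_elem(1)[OF p0 p i0(1)] .
    then show ?thesis using e r reach.r1[OF r] by auto
  qed
qed

lemma reach_to_graph:
  "reach S0 S1 x y e \<Longrightarrow> x \<in> X \<Longrightarrow> (Inl {x, S0 x}, Inl {y, S0 y}) \<in> Adj\<^sup>*"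
proof (induction rule: reach.induct)
  case r0 then show ?case by simp
next
  case (r1 y e)
  have "y \<in> X" using r1 reach_X by blast
  then have "{S0 y, S0 (S0 y)} = {y, S0 y}" using S0S0 by auto
  then show ?case using r1 by simp
next
  case (r2 y e)
  have y: "y \<in> X" using r2 reach_X by blast
  have a1: "(Inl {y, S0 y}, Inr {y, S1 y}) \<in> Adj"
    using adjI(1)[OF pairs_mem[OF y] pairs_mem[OF y] y] by simp
  have a2: "(Inr {y, S1 y}, Inl {S1 y, S0 (S1 y)}) \<in> Adj"
    using adjI(2)[OF pairs_mem[OF S1X[OF y]] pairs_mem[OF y] S1X[OF y]] by simp
  show ?case using r2 a1 a2 by (meson rtrancl_into_rtrancl)
qed

definition "R = Adj\<^sup>* \<inter> (V \<times> V)"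

lemma equivR: "equiv V R"
proof -
  have "sym Adj" unfolding loop_adj_def sym_def by blast
  then have "sym (Adj\<^sup>*)" by (rule sym_rtrancl)
  then show ?thesis unfolding equiv_def refl_on_def sym_def trans_def R_def
    by (auto intro: rtrancl_trans)
qed

lemma InlV: "x \<in> X \<Longrightarrow> Inl {x, S0 x} \<in> V"
  unfolding loop_vertices_def using pairs_mem by blast

lemma num_loops_eq: "num_loops k S0 S1 = card (X // E)"
proof -
  define f where "f = (\<lambda>x. R `` {Inl {x, S0 x}})"
  define g where "g = (\<lambda>x. E `` {x})"
  have Vq: "V // R = f ` X"
  proof
    show "f ` X \<subseteq> V // R" unfolding f_def using InlV by (auto intro: quotientI)
  next
    show "V // R \<subseteq> f ` X"
    proof
      fix C assume "C \<in> V // R"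
      then obtain v where v: "v \<in> V" "C = R `` {v}" unfolding quotient_def by blast
      show "C \<in> f ` X"
      proof (cases v)
        case (Inl p)
        then have p: "p \<in> pairs k S0" using v unfolding loop_vertices_def by auto
        then obtain i where "i \<in> X" "p = {i, S0 i}" unfolding pairs_def X_def by auto
        then show ?thesis using v Inl unfolding f_def by auto
      next
        case (Inr q)
        then have q: "q \<in> pairs k S1" using v unfolding loop_vertices_def by auto
        then obtain i where i: "i \<in> X" "q = {i, S1 i}" unfolding pairs_def X_def by auto
        have "(Inl {i, S0 i}, Inr q) \<in> Adj"
          using adjI(1)[OF pairs_mem[OF i(1)] q i(1)] i(2) by simp
        then have "(Inl {i, S0 i}, v) \<in> R" using Inr v InlV[OF i(1)] unfolding R_def by auto
        then have "R `` {Inl {i, S0 i}} = R `` {v}" by (rule equiv_class_eq[OF equivR])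
        then show ?thesis using v i unfolding f_def by auto
      qed
    qed
  qed
  have Xq: "X // E = g ` X" unfolding quotient_def g_def by blast
  have "\<forall>x\<in>X. \<forall>y\<in>X. f x = f y \<longleftrightarrow> g x = g y"
  proof (intro ballI)
    fix x y assume x: "x \<in> X" and y: "y \<in> X"
    have "f x = f y \<longleftrightarrow> (Inl {x, S0 x}, Inl {y, S0 y}) \<in> R"
      unfolding f_def using eq_equiv_class_iff[OF equivR InlV[OF x] InlV[OF y]] .
    also have "\<dots> \<longleftrightarrow> (x, y) \<in> E"
    proof
      assume "(Inl {x, S0 x}, Inl {y, S0 y}) \<in> R"
      then have "\<forall>i \<in> {y, S0 y}. \<exists>e. reach S0 S1 x i e"
        using graph_to_reach[OF _ x] unfolding R_def by fastforce
      then show "(x, y) \<in> E" using x y unfolding E_def by auto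
    next
      assume "(x, y) \<in> E"
      then obtain e where "reach S0 S1 x y e" unfolding E_def by auto
      then show "(Inl {x, S0 x}, Inl {y, S0 y}) \<in> R"
        using reach_to_graph x InlV[OF x] InlV[OF y] unfolding R_def by blast
    qed
    also have "\<dots> \<longleftrightarrow> g x = g y"
      unfolding g_def using eq_equiv_class_iff[OF equivE x y] by simp
    finally show "f x = f y \<longleftrightarrow> g x = g y" .
  qed
  then have "card (f ` X) = card (g ` X)" by (rule card_eq_kernel)
  then show ?thesis unfolding num_loops_def using Vq Xq R_def by simp
qed

lemma nb_iff: "neighbors a c \<longleftrightarrow> fst a = fst c \<and> snd a div 2 = snd c div 2 \<and> snd a \<noteq> snd c"
proof
  assume "neighbors a c" then show "fst a = fst c \<and> snd a div 2 = snd c div 2 \<and> snd a \<noteq> snd c"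
    unfolding neighbors_def by auto
next
  assume h: "fst a = fst c \<and> snd a div 2 = snd c div 2 \<and> snd a \<noteq> snd c"
  then have "(snd a = 2*(snd a div 2) \<and> snd c = 2*(snd a div 2)+1) \<or> (snd a = 2*(snd a div 2)+1 \<and> snd c = 2*(snd a div 2))"
    by presburger
  then show "neighbors a c" using h unfolding neighbors_def by blast
qed

lemma boxes2: "(r, c) \<in> boxes (double_diagram lam) \<longleftrightarrow> r < length lam \<and> c div 2 < lam ! r"
  unfolding boxes_def double_diagram_def by auto

lemma boxes1: "(r, c) \<in> boxes lam \<longleftrightarrow> r < length lam \<and> c < lam ! r"
  unfolding boxes_def by auto

lemma N2_eq:
  fixes S2 :: "nat \<Rightarrow> nat" and lam :: "nat list"
  assumes p2: "pair_partition k S2"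
  shows "N2 k S0 S1 S2 lam = card Bset * N1 k S0 S1 S2 lam"
proof -
  have S2X: "x \<in> X \<Longrightarrow> S2 x \<in> X" for x using p2 unfolding pair_partition_def X_def by blast
  define N1s where "N1s = {f \<in> X \<rightarrow>\<^sub>E boxes lam.
      \<forall>l\<in>X. f l = f (S0 l) \<and> snd (f l) = snd (f (S1 l)) \<and> fst (f l) = fst (f (S2 l))}"
  define N2s where "N2s = {f \<in> X \<rightarrow>\<^sub>E boxes (double_diagram lam).
      \<forall>l\<in>X. neighbors (f l) (f (S0 l)) \<and> snd (f l) = snd (f (S0 (S1 l)))
                    \<and> fst (f l) = fst (f (S2 l))}"
  have n1: "N1 k S0 S1 S2 lam = card N1s" unfolding N1_def N1s_def X_def by simp
  have n2: "N2 k S0 S1 S2 lam = card N2s" unfolding N2_def N2s_def X_def by simp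
  define Psi :: "(nat \<Rightarrow> nat \<times> nat) \<times> (nat \<Rightarrow> bool) \<Rightarrow> nat \<Rightarrow> nat \<times> nat" where
    "Psi = (\<lambda>(g, b). restrict (\<lambda>l. (fst (g l), 2 * snd (g l) + (if b l then 1 else 0))) X)"
  have inj: "inj_on Psi (N1s \<times> Bset)"
  proof (rule inj_onI)
    fix u v assume u: "u \<in> N1s \<times> Bset" and v: "v \<in> N1s \<times> Bset" and eq: "Psi u = Psi v"
    obtain g b where gb: "u = (g, b)" by force
    obtain g' b' where gb': "v = (g', b')" by force
    have ext: "g \<in> extensional X" "g' \<in> extensional X" "b \<in> extensional X" "b' \<in> extensional X"
      using u v gb gb' unfolding N1s_def Bset_def by (auto simp: PiE_def)
    have *: "fst (g l) = fst (g' l) \<and> 2 * snd (g l) + (if b l then 1 else 0) = 2 * snd (g' l) + (if b' l then 1 else 0)"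
      if "l \<in> X" for l
      using fun_cong[OF eq, of l] that gb gb' unfolding Psi_def by simp
    have "g = g'"
    proof
      fix l show "g l = g' l"
      proof (cases "l \<in> X")
        case True
        from *[OF True] have "fst (g l) = fst (g' l)" "snd (g l) = snd (g' l)"
          by (auto split: if_splits)
        then show ?thesis by (simp add: prod_eq_iff)
      next
        case False then show ?thesis using ext by (simp add: extensional_def)
      qed
    qed
    moreover have "b = b'"
    proof
      fix l show "b l = b' l"
      proof (cases "l \<in> X")
        case True
        from *[OF True] show ?thesis by (auto split: if_splits) presburger+
      next
        case False then show ?thesis using ext by (simp add: extensional_def)
      qed
    qed
    ultimately show "u = v" using gb gb' by simp
  qed
  have img: "Psi ` (N1s \<times> Bset) = N2s"
  proof
    show "Psi ` (N1s \<times> Bset) \<subseteq> N2s"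
    proof
      fix f assume "f \<in> Psi ` (N1s \<times> Bset)"
      then obtain g b where g: "g \<in> N1s" and b: "b \<in> Bset" and f: "f = Psi (g, b)" by auto
      have fl: "f l = (fst (g l), 2 * snd (g l) + (if b l then 1 else 0))" if "l \<in> X" for l
        using f that unfolding Psi_def by simp
      have gX: "\<forall>l\<in>X. g l = g (S0 l) \<and> snd (g l) = snd (g (S1 l)) \<and> fst (g l) = fst (g (S2 l))"
        and gbox: "\<forall>l\<in>X. g l \<in> boxes lam" using g unfolding N1s_def by (auto simp: PiE_def Pi_def)
      have bX: "\<forall>l\<in>X. b (S0 l) = (\<not> b l) \<and> b (S1 l) = (\<not> b l)" using b unfolding Bset_def by auto
      have "f \<in> X \<rightarrow>\<^sub>E boxes (double_diagram lam)"
      proof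
        fix l assume l: "l \<in> X"
        obtain r c where rc: "g l = (r, c)" by force
        then have "r < length lam" "c < lam ! r" using gbox l boxes1 by auto
        then show "f l \<in> boxes (double_diagram lam)" using fl[OF l] rc boxes2 by auto
      next
        fix l assume "l \<notin> X" then show "f l = undefined" unfolding f Psi_def by simp
      qed
      moreover have "\<forall>l\<in>X. neighbors (f l) (f (S0 l)) \<and> snd (f l) = snd (f (S0 (S1 l)))
                    \<and> fst (f l) = fst (f (S2 l))"
      proof
        fix l assume l: "l \<in> X"
        have l0: "S0 l \<in> X" "S1 l \<in> X" "S0 (S1 l) \<in> X" "S2 l \<in> X" using l S0X S1X S2X by auto
        have a: "neighbors (f l) (f (S0 l))"
          unfolding nb_iff using fl[OF l] fl[OF l0(1)] gX l bX by auto
        have "g (S0 (S1 l)) = g (S1 l)" using gX l0(2) by metis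
        moreover have "b (S0 (S1 l)) = b l" using bX l0(2) l by simp
        moreover have "snd (g l) = snd (g (S1 l))" using gX l by blast
        ultimately have c: "snd (f l) = snd (f (S0 (S1 l)))"
          using fl[OF l] fl[OF l0(3)] by simp
        have "fst (g l) = fst (g (S2 l))" using gX l by blast
        then have d: "fst (f l) = fst (f (S2 l))" using fl[OF l] fl[OF l0(4)] by simp
        show "neighbors (f l) (f (S0 l)) \<and> snd (f l) = snd (f (S0 (S1 l))) \<and> fst (f l) = fst (f (S2 l))"
          using a c d by blast
      qed
      ultimately show "f \<in> N2s" unfolding N2s_def by blast
    qed
  next
    show "N2s \<subseteq> Psi ` (N1s \<times> Bset)"
    proof
      fix f assume f: "f \<in> N2s"
      have fX: "\<forall>l\<in>X. neighbors (f l) (f (S0 l)) \<and> snd (f l) = snd (f (S0 (S1 l)))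
                    \<and> fst (f l) = fst (f (S2 l))"
        and fbox: "\<forall>l\<in>X. f l \<in> boxes (double_diagram lam)"
        and fext: "f \<in> extensional X" using f unfolding N2s_def by (auto simp: PiE_def Pi_def)
      define g where "g = restrict (\<lambda>l. (fst (f l), snd (f l) div 2)) X"
      define b where "b = restrict (\<lambda>l. odd (snd (f l))) X"
      have nbs: "fst (f l) = fst (f (S0 l)) \<and> snd (f l) div 2 = snd (f (S0 l)) div 2 \<and> snd (f l) \<noteq> snd (f (S0 l))"
        if "l \<in> X" for l using fX that nb_iff by blast
      have par: "odd (snd (f (S0 l))) = (\<not> odd (snd (f l)))" if "l \<in> X" for l
        using nbs[OF that] by presburger
      have gN: "g \<in> N1s"
        unfolding N1s_def
      proof (intro CollectI conjI ballI)
        show "g \<in> X \<rightarrow>\<^sub>E boxes lam"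
        proof
          fix l assume l: "l \<in> X"
          obtain r c where rc: "f l = (r, c)" by force
          then have "r < length lam" "c div 2 < lam ! r" using fbox l boxes2 by auto
          then show "g l \<in> boxes lam" using rc l boxes1 unfolding g_def by auto
        qed (simp add: g_def)
      next
        fix l assume l: "l \<in> X"
        show "g l = g (S0 l)" using nbs[OF l] l S0X unfolding g_def by (simp add: prod_eq_iff)
      next
        fix l assume l: "l \<in> X"
        have "snd (f l) = snd (f (S0 (S1 l)))" using fX l by blast
        moreover have "snd (f (S1 l)) div 2 = snd (f (S0 (S1 l))) div 2" using nbs[OF S1X[OF l]] by blast
        ultimately show "snd (g l) = snd (g (S1 l))" using l S1X unfolding g_def by simp
      next
        fix l assume l: "l \<in> X"
        show "fst (g l) = fst (g (S2 l))" using fX l S2X unfolding g_def by simp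
      qed
      have bB: "b \<in> Bset"
        unfolding Bset_def
      proof (intro CollectI conjI ballI)
        show "b \<in> X \<rightarrow>\<^sub>E UNIV" unfolding b_def by simp
      next
        fix l assume l: "l \<in> X"
        show "b (S0 l) = (\<not> b l)" using par[OF l] l S0X unfolding b_def by simp
      next
        fix l assume l: "l \<in> X"
        have "snd (f l) = snd (f (S0 (S1 l)))" using fX l by blast
        then have "odd (snd (f (S1 l))) = (\<not> odd (snd (f l)))" using par[OF S1X[OF l]] by simp
        then show "b (S1 l) = (\<not> b l)" using l S1X unfolding b_def by simp
      qed
      have "Psi (g, b) = f"
      proof
        fix l show "Psi (g, b) l = f l"
        proof (cases "l \<in> X")
          case True
          have "2 * (snd (f l) div 2) + (if odd (snd (f l)) then 1 else 0) = snd (f l)" by presburger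
          then show ?thesis using True unfolding Psi_def g_def b_def by (simp add: prod_eq_iff)
        next
          case False then show ?thesis using fext unfolding Psi_def by (simp add: extensional_def)
        qed
      qed
      then show "f \<in> Psi ` (N1s \<times> Bset)" using gN bB by force
    qed
  qed
  have "card N2s = card (N1s \<times> Bset)" using card_image[OF inj] img by simp
  then show ?thesis using n1 n2 by (simp add: card_cartesian_product)
qed

end

theorem lemma3p2:
  fixes k :: nat and S0 S1 S2 :: "nat \<Rightarrow> nat"
  assumes "pair_partition k S0" and "pair_partition k S1" and "pair_partition k S2"
  shows "\<forall>lam. young lam \<longrightarrow> N2 k S0 S1 S2 lam = 2 ^ num_loops k S0 S1 * N1 k S0 S1 S2 lam"
proof (intro allI impI)
  fix lam :: "nat list"
  interpret pp k S0 S1 using assms(1,2) by unfold_locales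
  show "N2 k S0 S1 S2 lam = 2 ^ num_loops k S0 S1 * N1 k S0 S1 S2 lam"
    using N2_eq[OF assms(3)] card_Bset num_loops_eq by simp
qed

end
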